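(* Let $\Lambda=(0,\infty)$ and let $\chi\colon\Lambda\to\mathbb{R}^3_+$ be continuous, bounded, with $\operatorname{supp}\chi=[0,1]$ and $\chi(\lambda)\ne\mathbf{0}$ on $(0,1)$; let $\eta=\chi/\langle\mathbf{1},\chi\rangle$ on $(0,1)$, extended continuously to $[0,1]$. Let $\mathcal{P}=\{\int\chi\,\mathrm{d}\nu:\nu$ finite nonnegative Borel measure on $\Lambda\}$ with nonempty interior, $A=\{\mathbf{x}\in\mathbb{R}^3:\langle\mathbf{x},\mathbf{1}\rangle=1\}$, $\mathcal{T}=\mathcal{P}\cap A$. If the spectral locus is convex, then for any $a<b$ in $[0,1]$, \[ \operatorname{conv}\bigl(\eta([a,b]_{\mathbb{T}})\bigr)\cap\operatorname{conv}\bigl(\eta([b,a]_{\mathbb{T}})\bigr)=[\eta(a),\eta(b)]. \]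
   Context: $[\mathbf{x},\mathbf{y}]$ denotes the closed segment between $\mathbf{x}$ and $\mathbf{y}$. $\mathcal{T}$ is regarded as a subset of the plane $A$ with its relative topology. Fix a direction and orientation in $A$; $\angle(\mathbf{c}',\mathbf{c})$ is the angle from $\mathbf{c}$ to $\mathbf{c}'$. A closed cyclic interval $[a,b]_{\mathbb{T}}\subset[0,1]$ is $[a,b]$ if $a\le b$ and $[a,1]\cup[0,b]$ if $a>b$. The spectral locus $\eta([0,1])$ is convex if $\eta([0,1])\subset\partial\mathcal{T}$ and for every $\mathbf{c}\in\operatorname{int}\mathcal{T}$ a continuous version of $\lambda\mapsto\angle(\eta(\lambda),\mathbf{c})$ is monotone on $[0,1]$ with $|\angle(\eta(0),\mathbf{c})-\angle(\eta(1),\mathbf{c})|\le 2\pi$. *)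

theory Defs
  imports "HOL-Analysis.Analysis"
begin

definition one3 :: "real^3" where "one3 = vec 1"

definition planeA :: "(real^3) set" where "planeA = {x. x \<bullet> one3 = 1}"

text \<open>Fixed orthonormal basis (direction and orientation) of the direction space of A.\<close>
definition e1 :: "real^3" where "e1 = (1 / sqrt 2) *\<^sub>R vector [1, -1, 0]"
definition e2 :: "real^3" where "e2 = (1 / sqrt 6) *\<^sub>R vector [1, 1, -2]"

definition spec_cone :: "(real \<Rightarrow> real^3) \<Rightarrow> (real^3) set" where
  "spec_cone chi = {(integral\<^sup>L \<nu> chi) | \<nu>.
       sets \<nu> = sets (restrict_space (borel :: real measure) {0<..}) \<and> finite_measure \<nu>}"

definition Tset :: "(real \<Rightarrow> real^3) \<Rightarrow> (real^3) set" where
  "Tset chi = spec_cone chi \<inter> planeA"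

text \<open>Convexity of the spectral locus eta([0,1]), with T carrying the relative topology of A.
  The angle of c' seen from c is encoded by a continuous lift theta.\<close>
definition convex_locus :: "(real \<Rightarrow> real^3) \<Rightarrow> (real^3) set \<Rightarrow> bool" where
  "convex_locus \<eta> T \<longleftrightarrow>
     \<eta> ` {0..1} \<subseteq> (subtopology euclidean planeA) frontier_of T \<and>
     (\<forall>c \<in> (subtopology euclidean planeA) interior_of T.
        \<exists>\<theta> :: real \<Rightarrow> real.
          continuous_on {0..1} \<theta> \<and>
          (\<forall>l\<in>{0..1}. \<eta> l - c = norm (\<eta> l - c) *\<^sub>R (cos (\<theta> l) *\<^sub>R e1 + sin (\<theta> l) *\<^sub>R e2)) \<and>
          ((\<forall>x\<in>{0..1}. \<forall>y\<in>{0..1}. x \<le> y \<longrightarrow> \<theta> x \<le> \<theta> y) \<or>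
           (\<forall>x\<in>{0..1}. \<forall>y\<in>{0..1}. x \<le> y \<longrightarrow> \<theta> y \<le> \<theta> x)) \<and>
          \<bar>\<theta> 0 - \<theta> 1\<bar> \<le> 2 * pi)"

definition cyc_interval :: "real \<Rightarrow> real \<Rightarrow> real set" where
  "cyc_interval a b = (if a \<le> b then {a..b} else {a..1} \<union> {0..b})"

end

theory Submission
  imports Defs
begin

lemma summeas_emeasure:
  fixes M N1 N2 :: "'a measure"
  assumes s1: "sets N1 = sets M" and s2: "sets N2 = sets M"
  shows "emeasure (measure_of (space M) (sets M) (\<lambda>A. emeasure N1 A + emeasure N2 A)) A
          = (if A \<in> sets M then emeasure N1 A + emeasure N2 A else 0)"
proof (cases "A \<in> sets M")
  case True
  have "emeasure (measure_of (space M) (sets M) (\<lambda>A. emeasure N1 A + emeasure N2 A)) A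
          = emeasure N1 A + emeasure N2 A"
  proof (rule emeasure_measure_of_sigma)
    show "sigma_algebra (space M) (sets M)" by (rule sets.sigma_algebra_axioms)
    show "positive (sets M) (\<lambda>A. emeasure N1 A + emeasure N2 A)"
      by (auto simp: positive_def)
    show "countably_additive (sets M) (\<lambda>A. emeasure N1 A + emeasure N2 A)"
      unfolding countably_additive_def
    proof safe
      fix F :: "nat \<Rightarrow> 'a set" assume F: "range F \<subseteq> sets M" "disjoint_family F"
      have "(\<Sum>i. emeasure N1 (F i) + emeasure N2 (F i)) = (\<Sum>i. emeasure N1 (F i)) + (\<Sum>i. emeasure N2 (F i))"
        by (rule suminf_add[symmetric]) auto
      also have "\<dots> = emeasure N1 (\<Union>i. F i) + emeasure N2 (\<Union>i. F i)"
        using F s1 s2 by (simp add: suminf_emeasure)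
      finally show "(\<Sum>i. emeasure N1 (F i) + emeasure N2 (F i)) = emeasure N1 (\<Union>(range F)) + emeasure N2 (\<Union>(range F))" .
    qed
  qed (fact True)
  then show ?thesis using True by simp
next
  case False then show ?thesis by (simp add: emeasure_notin_sets)
qed

lemma summeas_nn:
  fixes M N1 N2 :: "'a measure"
  assumes s1: "sets N1 = sets M" and s2: "sets N2 = sets M"
  and f: "f \<in> borel_measurable M"
  shows "(\<integral>\<^sup>+x. f x \<partial>(measure_of (space M) (sets M) (\<lambda>A. emeasure N1 A + emeasure N2 A)))
     = (\<integral>\<^sup>+x. f x \<partial>N1) + (\<integral>\<^sup>+x. f x \<partial>N2)"
  using f
proof (induct rule: borel_measurable_induct)
  define N where "N = measure_of (space M) (sets M) (\<lambda>A. emeasure N1 A + emeasure N2 A)"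
  have sN: "sets N = sets M" unfolding N_def by simp
  have sp: "space N = space M" "space N1 = space M" "space N2 = space M"
    using sets_eq_imp_space_eq[OF sN] sets_eq_imp_space_eq[OF s1] sets_eq_imp_space_eq[OF s2] by auto
  {
  case (cong f g)
  have "(\<integral>\<^sup>+x. f x \<partial>N) = (\<integral>\<^sup>+x. g x \<partial>N)" by (rule nn_integral_cong) (use cong sp in auto)
  moreover have "(\<integral>\<^sup>+x. f x \<partial>N1) = (\<integral>\<^sup>+x. g x \<partial>N1)" by (rule nn_integral_cong) (use cong sp in auto)
  moreover have "(\<integral>\<^sup>+x. f x \<partial>N2) = (\<integral>\<^sup>+x. g x \<partial>N2)" by (rule nn_integral_cong) (use cong sp in auto)
  ultimately show ?case using cong(4) unfolding N_def by simp
  next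
  case (set A)
  then show ?case using s1 s2 summeas_emeasure[OF s1 s2, of A] by simp
  next
  case (mult u c)
  have m1: "u \<in> borel_measurable N1" "u \<in> borel_measurable N2" "u \<in> borel_measurable N"
    using mult(2) by (simp_all add: measurable_cong_sets[OF s1 refl] measurable_cong_sets[OF s2 refl] measurable_cong_sets[OF sN refl])
  show ?case using mult(4) unfolding N_def[symmetric]
    by (simp add: nn_integral_cmult m1 distrib_left)
  next
  case (add u v)
  have m1: "u \<in> borel_measurable N1" "u \<in> borel_measurable N2" "u \<in> borel_measurable N"
    "v \<in> borel_measurable N1" "v \<in> borel_measurable N2" "v \<in> borel_measurable N"
    using add by (simp_all add: measurable_cong_sets[OF s1 refl] measurable_cong_sets[OF s2 refl] measurable_cong_sets[OF sN refl])
  show ?case using add(3) add(7) unfolding N_def[symmetric]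
    by (simp add: nn_integral_add m1 algebra_simps)
  next
  case (seq U)
  have m1: "\<And>i. U i \<in> borel_measurable N1" "\<And>i. U i \<in> borel_measurable N2" "\<And>i. U i \<in> borel_measurable N"
    using seq by (simp_all add: measurable_cong_sets[OF s1 refl] measurable_cong_sets[OF s2 refl] measurable_cong_sets[OF sN refl])
  have "(\<integral>\<^sup>+x. (SUP i. U i) x \<partial>N) = (SUP i. integral\<^sup>N N (U i))"
    unfolding SUP_apply by (rule nn_integral_monotone_convergence_SUP[OF seq(4) m1(3)])
  also have "\<dots> = (SUP i. integral\<^sup>N N1 (U i) + integral\<^sup>N N2 (U i))"
    using seq(3) unfolding N_def by simp
  also have "\<dots> = (SUP i. integral\<^sup>N N1 (U i)) + (SUP i. integral\<^sup>N N2 (U i))"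
    by (rule ennreal_SUP_add) (use seq(4) in \<open>auto intro!: nn_integral_mono simp: incseq_def le_fun_def\<close>)
  also have "\<dots> = (\<integral>\<^sup>+x. (SUP i. U i) x \<partial>N1) + (\<integral>\<^sup>+x. (SUP i. U i) x \<partial>N2)"
    unfolding SUP_apply
    by (simp add: nn_integral_monotone_convergence_SUP[OF seq(4) m1(1)] nn_integral_monotone_convergence_SUP[OF seq(4) m1(2)])
  finally show ?case unfolding N_def .
  }
qed

lemma summeas_real:
  fixes M N1 N2 :: "'a measure" and g :: "'a \<Rightarrow> real"
  assumes s1: "sets N1 = sets M" and s2: "sets N2 = sets M"
  and f1: "finite_measure N1" and f2: "finite_measure N2"
  and g: "g \<in> borel_measurable M" and B: "\<And>x. x \<in> space M \<Longrightarrow> norm (g x) \<le> B"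
  defines "N \<equiv> measure_of (space M) (sets M) (\<lambda>A. emeasure N1 A + emeasure N2 A)"
  shows "finite_measure N" "integral\<^sup>L N g = integral\<^sup>L N1 g + integral\<^sup>L N2 g"
proof -
  have sN: "sets N = sets M" unfolding N_def by simp
  have sp: "space N = space M" "space N1 = space M" "space N2 = space M"
    using sets_eq_imp_space_eq[OF sN] sets_eq_imp_space_eq[OF s1] sets_eq_imp_space_eq[OF s2] by auto
  have "emeasure N (space N) = emeasure N1 (space M) + emeasure N2 (space M)"
    unfolding N_def using summeas_emeasure[OF s1 s2, of "space M"] by simp
  also have "\<dots> < \<infinity>" using f1 f2 sp
    by (metis ennreal_add_eq_top finite_measure.emeasure_finite infinity_ennreal_def top.not_eq_extremum)
  finally show fN: "finite_measure N" by (intro finite_measureI) auto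
  have gm: "g \<in> borel_measurable N" "g \<in> borel_measurable N1" "g \<in> borel_measurable N2"
    using g by (simp_all add: measurable_cong_sets[OF s1 refl] measurable_cong_sets[OF s2 refl] measurable_cong_sets[OF sN refl])
  have i: "integrable N g" "integrable N1 g" "integrable N2 g"
    using finite_measure.integrable_const_bound[OF fN, of g B] 
      finite_measure.integrable_const_bound[OF f1, of g B]
      finite_measure.integrable_const_bound[OF f2, of g B] gm B sp by (auto intro!: AE_I2)
  have gm': "(\<lambda>x. ennreal (g x)) \<in> borel_measurable M" "(\<lambda>x. ennreal (- g x)) \<in> borel_measurable M"
    using g by auto
  have fin: "\<And>(K::'a measure) (h::'a \<Rightarrow> real). integrable K h \<Longrightarrow> (\<integral>\<^sup>+x. ennreal (h x) \<partial>K) < \<infinity> \<and> (\<integral>\<^sup>+x. ennreal (- h x) \<partial>K) < \<infinity>"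
  proof -
    fix K and h :: "'a \<Rightarrow> real" assume h: "integrable K h"
    have "(\<integral>\<^sup>+x. ennreal (h x) \<partial>K) \<le> (\<integral>\<^sup>+x. ennreal (norm (h x)) \<partial>K)"
      by (intro nn_integral_mono) auto
    moreover have "(\<integral>\<^sup>+x. ennreal (- h x) \<partial>K) \<le> (\<integral>\<^sup>+x. ennreal (norm (h x)) \<partial>K)"
      by (intro nn_integral_mono) auto
    moreover have "(\<integral>\<^sup>+x. ennreal (norm (h x)) \<partial>K) < \<infinity>" using h unfolding integrable_iff_bounded by blast
    ultimately show "(\<integral>\<^sup>+x. ennreal (h x) \<partial>K) < \<infinity> \<and> (\<integral>\<^sup>+x. ennreal (- h x) \<partial>K) < \<infinity>" by auto
  qed
  have "integral\<^sup>L N g = enn2real (\<integral>\<^sup>+x. g x \<partial>N) - enn2real (\<integral>\<^sup>+x. ennreal (- g x) \<partial>N)"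
    by (rule real_lebesgue_integral_def[OF i(1)])
  also have "\<dots> = enn2real ((\<integral>\<^sup>+x. g x \<partial>N1) + (\<integral>\<^sup>+x. g x \<partial>N2))
      - enn2real ((\<integral>\<^sup>+x. ennreal (- g x) \<partial>N1) + (\<integral>\<^sup>+x. ennreal (- g x) \<partial>N2))"
    unfolding N_def summeas_nn[OF s1 s2 gm'(1)] summeas_nn[OF s1 s2 gm'(2)] ..
  also have "\<dots> = (enn2real (\<integral>\<^sup>+x. g x \<partial>N1) - enn2real (\<integral>\<^sup>+x. ennreal (- g x) \<partial>N1))
     + (enn2real (\<integral>\<^sup>+x. g x \<partial>N2) - enn2real (\<integral>\<^sup>+x. ennreal (- g x) \<partial>N2))"
    using fin[OF i(2)] fin[OF i(3)] by (simp add: enn2real_plus)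
  also have "\<dots> = integral\<^sup>L N1 g + integral\<^sup>L N2 g"
    by (simp add: real_lebesgue_integral_def[OF i(2)] real_lebesgue_integral_def[OF i(3)])
  finally show "integral\<^sup>L N g = integral\<^sup>L N1 g + integral\<^sup>L N2 g" .
qed

lemma summeas_exists:
  fixes M N1 N2 :: "'a measure" and f :: "'a \<Rightarrow> 'b::euclidean_space"
  assumes s1: "sets N1 = sets M" and s2: "sets N2 = sets M"
  and f1: "finite_measure N1" and f2: "finite_measure N2"
  and f: "f \<in> borel_measurable M" and B: "\<And>x. x \<in> space M \<Longrightarrow> norm (f x) \<le> B"
  shows "\<exists>N. sets N = sets M \<and> finite_measure N \<and> integral\<^sup>L N f = integral\<^sup>L N1 f + integral\<^sup>L N2 f"
proof (intro exI conjI)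
  define N where "N \<equiv> measure_of (space M) (sets M) (\<lambda>A. emeasure N1 A + emeasure N2 A)"
  show "sets N = sets M" unfolding N_def by simp
  then have sN: "sets N = sets M" .
  have sp: "space N = space M" "space N1 = space M" "space N2 = space M"
    using sets_eq_imp_space_eq[OF sN] sets_eq_imp_space_eq[OF s1] sets_eq_imp_space_eq[OF s2] by auto
  have gm: "\<And>b. (\<lambda>x. f x \<bullet> b) \<in> borel_measurable M" using f by auto
  have gB: "\<And>b x. b \<in> Basis \<Longrightarrow> x \<in> space M \<Longrightarrow> norm (f x \<bullet> b) \<le> B"
    using B by (metis Basis_le_norm order_trans real_norm_def)
  obtain b0 :: 'b where b0: "b0 \<in> Basis" using nonempty_Basis by blast
  show "finite_measure N" using summeas_real(1)[OF s1 s2 f1 f2 gm gB[OF b0]] unfolding N_def .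
  then have fN: "finite_measure N" .
  have fm: "f \<in> borel_measurable N" "f \<in> borel_measurable N1" "f \<in> borel_measurable N2"
    using f by (simp_all add: measurable_cong_sets[OF s1 refl] measurable_cong_sets[OF s2 refl] measurable_cong_sets[OF sN refl])
  have i: "integrable N f" "integrable N1 f" "integrable N2 f"
    using finite_measure.integrable_const_bound[OF fN, of f B] 
      finite_measure.integrable_const_bound[OF f1, of f B]
      finite_measure.integrable_const_bound[OF f2, of f B] fm B sp by (auto intro!: AE_I2)
  show "integral\<^sup>L N f = integral\<^sup>L N1 f + integral\<^sup>L N2 f"
  proof (rule euclidean_eqI)
    fix b :: 'b assume b: "b \<in> Basis"
    have "integral\<^sup>L N f \<bullet> b = integral\<^sup>L N (\<lambda>x. f x \<bullet> b)" using i by simp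
    also have "\<dots> = integral\<^sup>L N1 (\<lambda>x. f x \<bullet> b) + integral\<^sup>L N2 (\<lambda>x. f x \<bullet> b)"
      using summeas_real(2)[OF s1 s2 f1 f2 gm gB[OF b]] unfolding N_def .
    also have "\<dots> = (integral\<^sup>L N1 f + integral\<^sup>L N2 f) \<bullet> b" using i by (simp add: inner_add_left)
    finally show "integral\<^sup>L N f \<bullet> b = (integral\<^sup>L N1 f + integral\<^sup>L N2 f) \<bullet> b" .
  qed
qed

lemma scalemeas_exists:
  fixes M :: "'a measure" and f :: "'a \<Rightarrow> 'b::euclidean_space" and r :: real
  assumes s1: "sets N1 = sets M" and f1: "finite_measure N1" and r: "0 \<le> r"
  and f: "f \<in> borel_measurable M" and B: "\<And>x. x \<in> space M \<Longrightarrow> norm (f x) \<le> B"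
  shows "\<exists>N. sets N = sets M \<and> finite_measure N \<and> integral\<^sup>L N f = r *\<^sub>R integral\<^sup>L N1 f"
proof (intro exI conjI)
  define N where "N = density N1 (\<lambda>_. ennreal r)"
  show "sets N = sets M" unfolding N_def using s1 by simp
  have "emeasure N (space N) = ennreal r * emeasure N1 (space N1)"
    unfolding N_def by (simp add: emeasure_density_const)
  also have "\<dots> < \<infinity>" using finite_measure.emeasure_finite[OF f1, of "space N1"]
    by (simp add: ennreal_mult_less_top less_top)
  finally show "finite_measure N" by (intro finite_measureI) auto
  have fm: "f \<in> borel_measurable N1" using f by (simp add: measurable_cong_sets[OF s1 refl])
  have "integral\<^sup>L N f = integral\<^sup>L (density N1 (\<lambda>_. r)) f" unfolding N_def ..
  also have "\<dots> = integral\<^sup>L N1 (\<lambda>x. r *\<^sub>R f x)"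
    by (rule integral_density[OF fm]) (use r in auto)
  also have "\<dots> = r *\<^sub>R integral\<^sup>L N1 f" by simp
  finally show "integral\<^sup>L N f = r *\<^sub>R integral\<^sup>L N1 f" .
qed

lemma chi_meas:
  fixes chi :: "real \<Rightarrow> real^3"
  assumes "continuous_on {0<..} chi"
  shows "chi \<in> borel_measurable (restrict_space borel {0<..})"
  using borel_measurable_continuous_on_restrict[OF assms] .

lemma spec_cone_convex:
  fixes chi :: "real \<Rightarrow> real^3"
  assumes cont: "continuous_on {0<..} chi" and bdd: "bounded (chi ` {0<..})"
  shows "convex (spec_cone chi)"
proof (rule convexI)
  let ?M = "restrict_space (borel :: real measure) {0<..}"
  have sp: "space ?M = {0<..}" by (simp add: space_restrict_space)
  obtain B where B: "\<And>x. x \<in> space ?M \<Longrightarrow> norm (chi x) \<le> B"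
    using bdd unfolding bounded_iff sp by auto
  have f: "chi \<in> borel_measurable ?M" using chi_meas[OF cont] .
  fix x y :: "real^3" and u v :: real
  assume x: "x \<in> spec_cone chi" and y: "y \<in> spec_cone chi" and u: "0 \<le> u" and v: "0 \<le> v" and uv: "u + v = 1"
  from x obtain N1 where N1: "x = integral\<^sup>L N1 chi" "sets N1 = sets ?M" "finite_measure N1"
    unfolding spec_cone_def by auto
  from y obtain N2 where N2: "y = integral\<^sup>L N2 chi" "sets N2 = sets ?M" "finite_measure N2"
    unfolding spec_cone_def by auto
  obtain P1 where P1: "sets P1 = sets ?M" "finite_measure P1" "integral\<^sup>L P1 chi = u *\<^sub>R integral\<^sup>L N1 chi"
    using scalemeas_exists[OF N1(2) N1(3) u f B] by blast
  obtain P2 where P2: "sets P2 = sets ?M" "finite_measure P2" "integral\<^sup>L P2 chi = v *\<^sub>R integral\<^sup>L N2 chi"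
    using scalemeas_exists[OF N2(2) N2(3) v f B] by blast
  obtain P where P: "sets P = sets ?M" "finite_measure P" "integral\<^sup>L P chi = integral\<^sup>L P1 chi + integral\<^sup>L P2 chi"
    using summeas_exists[OF P1(1) P2(1) P1(2) P2(2) f B] by blast
  show "u *\<^sub>R x + v *\<^sub>R y \<in> spec_cone chi"
    unfolding spec_cone_def using P P1 P2 N1 N2 by (intro CollectI exI[of _ P]) auto
qed

lemma spec_cone_scale:
  fixes chi :: "real \<Rightarrow> real^3"
  assumes cont: "continuous_on {0<..} chi" and bdd: "bounded (chi ` {0<..})"
  and x: "x \<in> spec_cone chi" and r: "0 \<le> r"
  shows "r *\<^sub>R x \<in> spec_cone chi"
proof -
  let ?M = "restrict_space (borel :: real measure) {0<..}"
  have sp: "space ?M = {0<..}" by (simp add: space_restrict_space)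
  obtain B where B: "\<And>x. x \<in> space ?M \<Longrightarrow> norm (chi x) \<le> B"
    using bdd unfolding bounded_iff sp by auto
  have f: "chi \<in> borel_measurable ?M" using chi_meas[OF cont] .
  from x obtain N1 where N1: "x = integral\<^sup>L N1 chi" "sets N1 = sets ?M" "finite_measure N1"
    unfolding spec_cone_def by auto
  obtain P1 where P1: "sets P1 = sets ?M" "finite_measure P1" "integral\<^sup>L P1 chi = r *\<^sub>R integral\<^sup>L N1 chi"
    using scalemeas_exists[OF N1(2) N1(3) r f B] by blast
  show ?thesis unfolding spec_cone_def using P1 N1 by (intro CollectI exI[of _ P1]) auto
qed

lemma spec_cone_nonneg:
  fixes chi :: "real \<Rightarrow> real^3"
  assumes cont: "continuous_on {0<..} chi" and bdd: "bounded (chi ` {0<..})"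
  and nn: "\<forall>l\<in>{0<..}. \<forall>i. 0 \<le> chi l $ i"
  and x: "x \<in> spec_cone chi"
  shows "0 \<le> x $ i"
proof -
  let ?M = "restrict_space (borel :: real measure) {0<..}"
  have sp: "space ?M = {0<..}" by (simp add: space_restrict_space)
  obtain B where B: "\<And>x. x \<in> space ?M \<Longrightarrow> norm (chi x) \<le> B"
    using bdd unfolding bounded_iff sp by auto
  have f: "chi \<in> borel_measurable ?M" using chi_meas[OF cont] .
  from x obtain N1 where N1: "x = integral\<^sup>L N1 chi" "sets N1 = sets ?M" "finite_measure N1"
    unfolding spec_cone_def by auto
  have sp1: "space N1 = {0<..}" using sets_eq_imp_space_eq[OF N1(2)] sp by simp
  have fm: "chi \<in> borel_measurable N1" using f by (simp add: measurable_cong_sets[OF N1(2) refl])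
  have i: "integrable N1 chi"
    using finite_measure.integrable_const_bound[OF N1(3), of chi B] fm B sp sp1 by (auto intro!: AE_I2)
  have "x $ i = x \<bullet> axis i 1" by (simp add: inner_axis)
  also have "\<dots> = integral\<^sup>L N1 (\<lambda>l. chi l \<bullet> axis i 1)" using i N1(1) by simp
  also have "\<dots> \<ge> 0" by (rule integral_nonneg_AE) (use nn sp1 in \<open>auto intro!: AE_I2 simp: inner_axis\<close>)
  finally show ?thesis .
qed

lemma planeA_closed: "closed planeA"
proof -
  have "planeA = {x. one3 \<bullet> x = 1}" unfolding planeA_def by (simp add: inner_commute)
  then show ?thesis using closed_hyperplane[of one3 1] by simp
qed

lemma int_char:
  assumes S: "S \<subseteq> planeA"
  shows "c \<in> (top_of_set planeA) interior_of S \<longleftrightarrow> c \<in> planeA \<and> (\<exists>e>0. \<forall>z\<in>planeA. dist z c < e \<longrightarrow> z \<in> S)"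
proof
  assume "c \<in> (top_of_set planeA) interior_of S"
  then obtain T where T: "openin (top_of_set planeA) T" "c \<in> T" "T \<subseteq> S"
    unfolding interior_of_def by auto
  then show "c \<in> planeA \<and> (\<exists>e>0. \<forall>z\<in>planeA. dist z c < e \<longrightarrow> z \<in> S)"
    unfolding openin_euclidean_subtopology_iff by blast
next
  assume "c \<in> planeA \<and> (\<exists>e>0. \<forall>z\<in>planeA. dist z c < e \<longrightarrow> z \<in> S)"
  then obtain e where e: "e > 0" "\<forall>z\<in>planeA. dist z c < e \<longrightarrow> z \<in> S" and c: "c \<in> planeA" by auto
  have "openin (top_of_set planeA) (planeA \<inter> ball c e)"
    by (rule openin_open_Int) simp
  moreover have "c \<in> planeA \<inter> ball c e" using c e by auto
  moreover have "planeA \<inter> ball c e \<subseteq> S" using e by (auto simp: dist_commute)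
  ultimately show "c \<in> (top_of_set planeA) interior_of S"
    unfolding interior_of_def by blast
qed

lemma clo_char:
  assumes S: "S \<subseteq> planeA"
  shows "(top_of_set planeA) closure_of S = closure S"
proof -
  have "closure S \<subseteq> planeA" using S planeA_closed by (simp add: closure_minimal)
  then show ?thesis unfolding closure_of_subtopology using S
    by (simp add: Int_absorb1 Int_absorb2 euclidean_closure_of)
qed

lemma K1:
  assumes cvx: "convex S" and S: "S \<subseteq> planeA"
  and c: "c \<in> (top_of_set planeA) interior_of S"
  and w: "w \<in> closure S" and y: "y \<in> open_segment c w"
  shows "y \<in> (top_of_set planeA) interior_of S"
proof -
  from c obtain e where cA: "c \<in> planeA" and e: "e > 0" "\<forall>z\<in>planeA. dist z c < e \<longrightarrow> z \<in> S"
    unfolding int_char[OF S] by auto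
  have wA: "w \<in> planeA" using w S planeA_closed closure_minimal by blast
  from y obtain s where s: "0 < s" "s < 1" "y = (1 - s) *\<^sub>R c + s *\<^sub>R w"
    unfolding in_segment by auto
  define \<delta> where "\<delta> = (1 - s) * e / (2 * s)"
  have \<delta>: "\<delta> > 0" unfolding \<delta>_def using s e by auto
  obtain w' where w': "w' \<in> S" "dist w' w < \<delta>" using w \<delta> closure_approachable by blast
  have w'A: "w' \<in> planeA" using w' S by auto
  have yA: "y \<in> planeA" using cA wA unfolding planeA_def s(3) by (simp add: inner_add_left algebra_simps)
  define d where "d = (1 - s) * e / 2"
  have d: "d > 0" unfolding d_def using s e by auto
  have "\<forall>z\<in>planeA. dist z y < d \<longrightarrow> z \<in> S"
  proof safe
    fix z assume zA: "z \<in> planeA" and zd: "dist z y < d"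
    define c' where "c' = (1 / (1 - s)) *\<^sub>R (z - s *\<^sub>R w')"
    have c'A: "c' \<in> planeA" using zA w'A s unfolding planeA_def c'_def
      by (simp add: inner_diff_left field_simps)
    have h1: "(1 - s) *\<^sub>R c' = z - s *\<^sub>R w'" unfolding c'_def using s by simp
    have h2: "(1 - s) *\<^sub>R (c' - c) = (z - y) + s *\<^sub>R (w - w')"
      using h1 unfolding s(3) by (simp add: algebra_simps)
    have eq: "c' - c = (1 / (1 - s)) *\<^sub>R ((z - y) + s *\<^sub>R (w - w'))"
      unfolding h2[symmetric] using s by simp
    have "norm ((z - y) + s *\<^sub>R (w - w')) \<le> norm (z - y) + s * norm (w - w')"
      using s norm_triangle_ineq[of "z - y" "s *\<^sub>R (w - w')"] by simp
    also have "\<dots> < d + s * \<delta>"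
    proof -
      have "norm (z - y) < d" using zd by (simp add: dist_norm)
      moreover have "s * norm (w - w') < s * \<delta>" using w'(2) s by (simp add: dist_norm norm_minus_commute)
      ultimately show ?thesis by simp
    qed
    also have "\<dots> = (1 - s) * e" unfolding d_def \<delta>_def using s by (simp add: field_simps)
    finally have nv: "norm ((z - y) + s *\<^sub>R (w - w')) < (1 - s) * e" .
    have "norm (c' - c) = norm ((z - y) + s *\<^sub>R (w - w')) / (1 - s)" unfolding eq using s by simp
    then have "norm (c' - c) < e" using nv s by (simp add: pos_divide_less_eq mult.commute)
    then have "c' \<in> S" using e c'A by (simp add: dist_norm)
    moreover have "z = (1 - s) *\<^sub>R c' + s *\<^sub>R w'" using h1 by (simp add: algebra_simps)
    ultimately show "z \<in> S" using convexD[OF cvx, of c' w' "1 - s" s] w' s by auto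
  qed
  then show ?thesis unfolding int_char[OF S] using yA d by blast
qed

lemma core_S1:
  fixes c p q y :: "'a::real_vector"
  assumes K: "\<forall>w\<in>C. \<forall>y. y \<in> open_segment c w \<longrightarrow> y \<in> U"
  and Cc: "convex C" and pC: "p \<in> C" and qC: "q \<in> C" and cU: "c \<in> U"
  and yU: "y \<notin> U" and l: "0 \<le> l" and m: "0 \<le> m" and y: "y - c = l *\<^sub>R (p - c) + m *\<^sub>R (q - c)"
  shows "1 \<le> l + m"
proof (rule ccontr)
  assume "\<not> 1 \<le> l + m"
  then have s1: "l + m < 1" by simp
  define s where "s = l + m"
  show False
  proof (cases "s = 0")
    case True
    then have "l = 0" "m = 0" using l m unfolding s_def by auto
    then have "y = c" using y by simp
    then show False using yU cU by simp
  next
    case False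
    then have s0: "s > 0" using l m unfolding s_def by auto
    define z where "z = (l / s) *\<^sub>R p + (m / s) *\<^sub>R q"
    have zC: "z \<in> C" unfolding z_def
      using convexD[OF Cc pC qC, of "l / s" "m / s"] l m s0 unfolding s_def
      by (simp add: add_divide_distrib[symmetric])
    have sz: "s *\<^sub>R z = l *\<^sub>R p + m *\<^sub>R q" unfolding z_def using s0 by (simp add: scaleR_add_right)
    have yeq: "y = (1 - s) *\<^sub>R c + s *\<^sub>R z"
    proof -
      have "y = c + l *\<^sub>R (p - c) + m *\<^sub>R (q - c)" using y by (simp add: algebra_simps)
      also have "\<dots> = (1 - s) *\<^sub>R c + (l *\<^sub>R p + m *\<^sub>R q)" unfolding s_def by (simp add: algebra_simps)
      finally show ?thesis unfolding sz .
    qed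
    have "c \<noteq> z"
    proof
      assume "c = z"
      then have "y = c" using yeq by (simp add: algebra_simps)
      then show False using yU cU by simp
    qed
    then have "y \<in> open_segment c z" unfolding in_segment using s0 s1 yeq unfolding s_def by auto
    then show False using K zC yU by blast
  qed
qed

lemma core_S2_aux:
  fixes c p q y :: "'a::real_vector"
  assumes K: "\<forall>w\<in>C. \<forall>y. y \<in> open_segment c w \<longrightarrow> y \<in> U"
  and Cc: "convex C" and qC: "q \<in> C" and cU: "c \<in> U" and pU: "p \<notin> U"
  and yC: "y \<in> C" and m: "m \<le> 0" and y: "y - c = l *\<^sub>R (p - c) + m *\<^sub>R (q - c)"
  shows "l + m \<le> 1"
proof (rule ccontr)
  assume "\<not> l + m \<le> 1"
  then have lm: "l + m > 1" by simp
  then have l1: "l > 1" using m by simp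
  define w where "w = (1 / (1 - m)) *\<^sub>R y + (- m / (1 - m)) *\<^sub>R q"
  have wC: "w \<in> C" unfolding w_def
  proof (rule convexD[OF Cc yC qC])
    show "0 \<le> 1 / (1 - m)" "0 \<le> - m / (1 - m)" using m by (auto intro!: divide_nonpos_pos)
    show "1 / (1 - m) + - m / (1 - m) = 1" using m by (simp add: field_simps)
  qed
  define t where "t = (1 - m) / l"
  have t: "0 < t" "t < 1" unfolding t_def using l1 m lm by (auto simp: field_simps)
  have tw: "t *\<^sub>R w = (1 / l) *\<^sub>R y - (m / l) *\<^sub>R q"
  proof -
    have "(1-m)/l * (1/(1-m)) = 1/l" "(1-m)/l * (m/(1-m)) = m/l" using m l1 by (auto simp: field_simps)
    then show ?thesis unfolding t_def w_def by (simp add: scaleR_diff_right)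
  qed
  have lt: "l * t = 1 - m" unfolding t_def using l1 by simp
  have mw: "(1 - m) *\<^sub>R w = y - m *\<^sub>R q"
  proof -
    have "(1 - m) * (1 / (1 - m)) = 1" "(1 - m) * (m / (1 - m)) = m" using m by (simp_all add: field_simps)
    then show ?thesis unfolding w_def by (simp add: scaleR_add_right scaleR_diff_right)
  qed
  have yy: "y = (1 - l - m) *\<^sub>R c + l *\<^sub>R p + m *\<^sub>R q"
  proof -
    have "y = (y - c) + c" by simp
    also have "\<dots> = (1 - l - m) *\<^sub>R c + l *\<^sub>R p + m *\<^sub>R q" unfolding y by (simp add: algebra_simps)
    finally show ?thesis .
  qed
  have "l *\<^sub>R ((1 - t) *\<^sub>R c + t *\<^sub>R w) = (l - l * t) *\<^sub>R c + (l * t) *\<^sub>R w"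
    by (simp add: algebra_simps)
  also have "\<dots> = (l - 1 + m) *\<^sub>R c + (1 - m) *\<^sub>R w" unfolding lt by simp
  also have "\<dots> = (l - 1 + m) *\<^sub>R c + (y - m *\<^sub>R q)" unfolding mw ..
  also have "\<dots> = l *\<^sub>R p" unfolding yy by (simp add: algebra_simps)
  finally have "l *\<^sub>R ((1 - t) *\<^sub>R c + t *\<^sub>R w) = l *\<^sub>R p" .
  then have peq: "p = (1 - t) *\<^sub>R c + t *\<^sub>R w" using l1 by simp
  have "c \<noteq> w"
  proof
    assume "c = w"
    then have "p = c" using peq by (simp add: algebra_simps)
    then show False using pU cU by simp
  qed
  then have "p \<in> open_segment c w" unfolding in_segment using t peq by auto
  then show False using K wC pU by blast
qed

lemma core:
  fixes c p q :: "'a::real_vector"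
  assumes K: "\<forall>w\<in>C. \<forall>y. y \<in> open_segment c w \<longrightarrow> y \<in> U"
  and Cc: "convex C" and pC: "p \<in> C" and qC: "q \<in> C" and pU: "p \<notin> U" and qU: "q \<notin> U" and cU: "c \<in> U"
  and S1C: "S1 \<subseteq> C" and S1U: "S1 \<inter> U = {}" and S2C: "S2 \<subseteq> C" and S2U: "S2 \<inter> U = {}"
  and indep: "\<forall>l m. l *\<^sub>R (p - c) + m *\<^sub>R (q - c) = 0 \<longrightarrow> l = 0 \<and> m = 0"
  and rep1: "\<forall>y\<in>S1. \<exists>l m. 0 \<le> l \<and> 0 \<le> m \<and> y - c = l *\<^sub>R (p - c) + m *\<^sub>R (q - c)"
  and rep2: "\<forall>y\<in>S2. \<exists>l m. (l \<le> 0 \<or> m \<le> 0) \<and> y - c = l *\<^sub>R (p - c) + m *\<^sub>R (q - c)"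
  shows "convex hull S1 \<inter> convex hull S2 \<subseteq> closed_segment p q"
proof -
  define Q1 where "Q1 = {y. \<exists>l m. 0 \<le> l \<and> 0 \<le> m \<and> 1 \<le> l + m \<and> y = c + l *\<^sub>R (p - c) + m *\<^sub>R (q - c)}"
  define Q2 where "Q2 = {y. \<exists>l m. l + m \<le> 1 \<and> y = c + l *\<^sub>R (p - c) + m *\<^sub>R (q - c)}"
  have cQ1: "convex Q1" unfolding Q1_def
  proof (rule convexI, clarify)
    fix u v l1 m1 l2 m2 :: real
    assume uv: "0 \<le> u" "0 \<le> v" "u + v = 1" and h: "0 \<le> l1" "0 \<le> m1" "1 \<le> l1 + m1" "0 \<le> l2" "0 \<le> m2" "1 \<le> l2 + m2"
    have "1 \<le> (u * l1 + v * l2) + (u * m1 + v * m2)"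
    proof -
      have "u * 1 \<le> u * (l1 + m1)" "v * 1 \<le> v * (l2 + m2)" using uv h by (intro mult_left_mono; simp)+
      then show ?thesis using uv by (simp add: algebra_simps)
    qed
    moreover have "u *\<^sub>R (c + l1 *\<^sub>R (p - c) + m1 *\<^sub>R (q - c)) + v *\<^sub>R (c + l2 *\<^sub>R (p - c) + m2 *\<^sub>R (q - c))
        = c + (u * l1 + v * l2) *\<^sub>R (p - c) + (u * m1 + v * m2) *\<^sub>R (q - c)"
    proof -
      have "u *\<^sub>R (c + l1 *\<^sub>R (p - c) + m1 *\<^sub>R (q - c)) + v *\<^sub>R (c + l2 *\<^sub>R (p - c) + m2 *\<^sub>R (q - c))
        = (u + v) *\<^sub>R c + (u * l1 + v * l2) *\<^sub>R (p - c) + (u * m1 + v * m2) *\<^sub>R (q - c)"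
        by (simp add: algebra_simps)
      then show ?thesis using uv(3) by simp
    qed
    ultimately show "\<exists>l m. 0 \<le> l \<and> 0 \<le> m \<and> 1 \<le> l + m \<and>
       u *\<^sub>R (c + l1 *\<^sub>R (p - c) + m1 *\<^sub>R (q - c)) + v *\<^sub>R (c + l2 *\<^sub>R (p - c) + m2 *\<^sub>R (q - c)) =
       c + l *\<^sub>R (p - c) + m *\<^sub>R (q - c)"
      using uv h by (intro exI[of _ "u * l1 + v * l2"] exI[of _ "u * m1 + v * m2"]) auto
  qed
  have cQ2: "convex Q2" unfolding Q2_def
  proof (rule convexI, clarify)
    fix u v l1 m1 l2 m2 :: real
    assume uv: "0 \<le> u" "0 \<le> v" "u + v = 1" and h: "l1 + m1 \<le> 1" "l2 + m2 \<le> 1"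
    have "(u * l1 + v * l2) + (u * m1 + v * m2) \<le> 1"
    proof -
      have "u * (l1 + m1) \<le> u * 1" "v * (l2 + m2) \<le> v * 1" using uv h by (intro mult_left_mono; simp)+
      then show ?thesis using uv by (simp add: algebra_simps)
    qed
    moreover have "u *\<^sub>R (c + l1 *\<^sub>R (p - c) + m1 *\<^sub>R (q - c)) + v *\<^sub>R (c + l2 *\<^sub>R (p - c) + m2 *\<^sub>R (q - c))
        = c + (u * l1 + v * l2) *\<^sub>R (p - c) + (u * m1 + v * m2) *\<^sub>R (q - c)"
    proof -
      have "u *\<^sub>R (c + l1 *\<^sub>R (p - c) + m1 *\<^sub>R (q - c)) + v *\<^sub>R (c + l2 *\<^sub>R (p - c) + m2 *\<^sub>R (q - c))
        = (u + v) *\<^sub>R c + (u * l1 + v * l2) *\<^sub>R (p - c) + (u * m1 + v * m2) *\<^sub>R (q - c)"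
        by (simp add: algebra_simps)
      then show ?thesis using uv(3) by simp
    qed
    ultimately show "\<exists>l m. l + m \<le> 1 \<and>
       u *\<^sub>R (c + l1 *\<^sub>R (p - c) + m1 *\<^sub>R (q - c)) + v *\<^sub>R (c + l2 *\<^sub>R (p - c) + m2 *\<^sub>R (q - c)) =
       c + l *\<^sub>R (p - c) + m *\<^sub>R (q - c)"
      by (intro exI[of _ "u * l1 + v * l2"] exI[of _ "u * m1 + v * m2"]) auto
  qed
  have S1Q: "S1 \<subseteq> Q1"
  proof
    fix y assume yS: "y \<in> S1"
    then obtain l m where lm: "0 \<le> l" "0 \<le> m" "y - c = l *\<^sub>R (p - c) + m *\<^sub>R (q - c)" using rep1 by blast
    have "1 \<le> l + m" by (rule core_S1[OF K Cc pC qC cU _ lm]) (use yS S1U in auto)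
    moreover have "y = c + l *\<^sub>R (p - c) + m *\<^sub>R (q - c)"
      using lm by (metis add.assoc add.commute diff_add_cancel)
    ultimately show "y \<in> Q1" unfolding Q1_def using lm by blast
  qed
  have S2Q: "S2 \<subseteq> Q2"
  proof
    fix y assume yS: "y \<in> S2"
    then obtain l m where lm: "l \<le> 0 \<or> m \<le> 0" "y - c = l *\<^sub>R (p - c) + m *\<^sub>R (q - c)" using rep2 by blast
    have yC: "y \<in> C" using yS S2C by auto
    have "l + m \<le> 1"
    proof (cases "m \<le> 0")
      case True
      show ?thesis by (rule core_S2_aux[OF K Cc qC cU pU yC True lm(2)])
    next
      case False
      then have "l \<le> 0" using lm by auto
      moreover have "y - c = m *\<^sub>R (q - c) + l *\<^sub>R (p - c)" using lm(2) by (simp add: add.commute)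
      ultimately have "m + l \<le> 1" by (rule core_S2_aux[OF K Cc pC cU qU yC])
      then show ?thesis by simp
    qed
    moreover have "y = c + l *\<^sub>R (p - c) + m *\<^sub>R (q - c)"
      using lm by (metis add.assoc add.commute diff_add_cancel)
    ultimately show "y \<in> Q2" unfolding Q2_def using lm by blast
  qed
  have h1: "convex hull S1 \<subseteq> Q1" by (intro hull_minimal S1Q cQ1)
  have h2: "convex hull S2 \<subseteq> Q2" by (intro hull_minimal S2Q cQ2)
  have "Q1 \<inter> Q2 \<subseteq> closed_segment p q"
  proof
    fix y assume "y \<in> Q1 \<inter> Q2"
    then obtain l1 m1 l2 m2 where a: "0 \<le> l1" "0 \<le> m1" "1 \<le> l1 + m1" "y = c + l1 *\<^sub>R (p - c) + m1 *\<^sub>R (q - c)"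
      and b: "l2 + m2 \<le> 1" "y = c + l2 *\<^sub>R (p - c) + m2 *\<^sub>R (q - c)"
      unfolding Q1_def Q2_def by blast
    have "(l1 - l2) *\<^sub>R (p - c) + (m1 - m2) *\<^sub>R (q - c) = 0"
      using a(4) b(2) by (simp add: algebra_simps)
    then have "l1 - l2 = 0 \<and> m1 - m2 = 0" using indep by blast
    then have "l1 = l2" "m1 = m2" by auto
    then have s: "l1 + m1 = 1" using a b by simp
    then have "l1 = 1 - m1" by simp
    then have "y = c + (1 - m1) *\<^sub>R (p - c) + m1 *\<^sub>R (q - c)" using a(4) by simp
    then have "y = (1 - m1) *\<^sub>R p + m1 *\<^sub>R q"
      by (simp add: algebra_simps)
    then show "y \<in> closed_segment p q" unfolding in_segment using a s by (intro conjI exI[of _ m1]) auto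
  qed
  then show ?thesis using h1 h2 by blast
qed

lemma trig_id:
  fixes e1 e2 :: "'a::real_vector"
  shows "sin (B - A) *\<^sub>R (cos T *\<^sub>R e1 + sin T *\<^sub>R e2)
     = sin (B - T) *\<^sub>R (cos A *\<^sub>R e1 + sin A *\<^sub>R e2) + sin (T - A) *\<^sub>R (cos B *\<^sub>R e1 + sin B *\<^sub>R e2)"
proof -
  have h1: "sin (B - A) * cos T = sin (B - T) * cos A + sin (T - A) * cos B"
    by (simp add: sin_diff algebra_simps)
  have h2: "sin (B - A) * sin T = sin (B - T) * sin A + sin (T - A) * sin B"
    by (simp add: sin_diff algebra_simps)
  have "sin (B - A) *\<^sub>R (cos T *\<^sub>R e1 + sin T *\<^sub>R e2) = (sin (B - A) * cos T) *\<^sub>R e1 + (sin (B - A) * sin T) *\<^sub>R e2"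
    by (simp add: scaleR_add_right)
  also have "\<dots> = (sin (B - T) * cos A + sin (T - A) * cos B) *\<^sub>R e1 + (sin (B - T) * sin A + sin (T - A) * sin B) *\<^sub>R e2"
    unfolding h1 h2 ..
  also have "\<dots> = sin (B - T) *\<^sub>R (cos A *\<^sub>R e1 + sin A *\<^sub>R e2) + sin (T - A) *\<^sub>R (cos B *\<^sub>R e1 + sin B *\<^sub>R e2)"
    by (simp add: algebra_simps)
  finally show ?thesis .
qed

lemma trig_dep:
  fixes e1 e2 :: "'a::real_vector"
  assumes "sin (B - A) = 0"
  shows "cos B *\<^sub>R e1 + sin B *\<^sub>R e2 = cos (B - A) *\<^sub>R (cos A *\<^sub>R e1 + sin A *\<^sub>R e2)"
proof -
  have "cos B = cos (A + (B - A))" "sin B = sin (A + (B - A))" by simp_all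
  then have "cos B = cos (B - A) * cos A" "sin B = cos (B - A) * sin A"
    by (simp_all only: cos_add sin_add assms) simp_all
  then show ?thesis by (simp add: scaleR_add_right)
qed

lemma scale_aux:
  fixes U V :: "'a::real_vector"
  assumes "ra \<noteq> 0" "rb \<noteq> 0"
  shows "(r / s) *\<^sub>R (A *\<^sub>R U + B *\<^sub>R V) = (r * A / (ra * s)) *\<^sub>R (ra *\<^sub>R U) + (r * B / (rb * s)) *\<^sub>R (rb *\<^sub>R V)"
  using assms by (simp add: scaleR_add_right)

lemma trig_rep:
  fixes e1 e2 c p q y :: "'a::real_vector"
  assumes s: "sin (tb - ta) \<noteq> 0" and ra: "ra > 0" and rb: "rb > 0"
  and p: "p - c = ra *\<^sub>R (cos ta *\<^sub>R e1 + sin ta *\<^sub>R e2)"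
  and q: "q - c = rb *\<^sub>R (cos tb *\<^sub>R e1 + sin tb *\<^sub>R e2)"
  and y: "y - c = r *\<^sub>R (cos f *\<^sub>R e1 + sin f *\<^sub>R e2)"
  shows "y - c = (r * sin (tb - f) / (ra * sin (tb - ta))) *\<^sub>R (p - c) + (r * sin (f - ta) / (rb * sin (tb - ta))) *\<^sub>R (q - c)"
proof -
  let ?s = "sin (tb - ta)"
  have "y - c = r *\<^sub>R (cos f *\<^sub>R e1 + sin f *\<^sub>R e2)" by (rule y)
  also have "\<dots> = (r / ?s) *\<^sub>R (?s *\<^sub>R (cos f *\<^sub>R e1 + sin f *\<^sub>R e2))" using s by (simp only: scaleR_scaleR) simp
  also have "\<dots> = (r / ?s) *\<^sub>R (sin (tb - f) *\<^sub>R (cos ta *\<^sub>R e1 + sin ta *\<^sub>R e2) + sin (f - ta) *\<^sub>R (cos tb *\<^sub>R e1 + sin tb *\<^sub>R e2))"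
    unfolding trig_id[of tb ta f e1 e2] ..
  also have "\<dots> = (r * sin (tb - f) / (ra * ?s)) *\<^sub>R (ra *\<^sub>R (cos ta *\<^sub>R e1 + sin ta *\<^sub>R e2))
       + (r * sin (f - ta) / (rb * ?s)) *\<^sub>R (rb *\<^sub>R (cos tb *\<^sub>R e1 + sin tb *\<^sub>R e2))"
    using scale_aux[of ra rb r ?s "sin (tb - f)" "cos ta *\<^sub>R e1 + sin ta *\<^sub>R e2" "sin (f - ta)" "cos tb *\<^sub>R e1 + sin tb *\<^sub>R e2"] ra rb
    by simp
  finally show ?thesis unfolding p q .
qed

lemma sin_nonpos_pi_2pi: "pi \<le> x \<Longrightarrow> x \<le> 2 * pi \<Longrightarrow> sin x \<le> 0"
  by (cases "x = 2 * pi") (auto intro: sin_le_zero)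

lemma sin_nonpos_negpi_0: "- pi \<le> x \<Longrightarrow> x \<le> 0 \<Longrightarrow> sin x \<le> 0"
  using sin_ge_zero[of "- x"] by simp

lemma sg:
  fixes r ra s A :: real
  assumes "0 \<le> r" "0 < ra"
  shows "0 < s \<Longrightarrow> 0 \<le> A \<Longrightarrow> 0 \<le> r * A / (ra * s)"
    "0 < s \<Longrightarrow> A \<le> 0 \<Longrightarrow> r * A / (ra * s) \<le> 0"
    "s < 0 \<Longrightarrow> A \<le> 0 \<Longrightarrow> 0 \<le> r * A / (ra * s)"
    "s < 0 \<Longrightarrow> 0 \<le> A \<Longrightarrow> r * A / (ra * s) \<le> 0"
  using assms
  by (auto simp: zero_le_divide_iff divide_le_0_iff zero_le_mult_iff mult_le_0_iff)

lemma main_geo: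
  fixes \<eta> :: "real \<Rightarrow> 'a::real_normed_vector" and e1 e2 c :: 'a and \<theta> :: "real \<Rightarrow> real"
  assumes K: "\<forall>w\<in>C. \<forall>y. y \<in> open_segment c w \<longrightarrow> y \<in> U"
  and Cc: "convex C" and cU: "c \<in> U"
  and \<eta>C: "\<forall>l\<in>{0..1}. \<eta> l \<in> C" and \<eta>U: "\<forall>l\<in>{0..1}. \<eta> l \<notin> U"
  and th: "\<forall>l\<in>{0..1}. \<eta> l - c = norm (\<eta> l - c) *\<^sub>R (cos (\<theta> l) *\<^sub>R e1 + sin (\<theta> l) *\<^sub>R e2)"
  and mono: "\<forall>x\<in>{0..1}. \<forall>y\<in>{0..1}. x \<le> y \<longrightarrow> \<theta> x \<le> \<theta> y"
  and tot: "\<theta> 1 - \<theta> 0 \<le> 2 * pi"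
  and indep: "\<forall>l m. l *\<^sub>R (\<eta> a - c) + m *\<^sub>R (\<eta> b - c) = 0 \<longrightarrow> l = 0 \<and> m = 0"
  and ab: "0 \<le> a" "a < b" "b \<le> 1"
  shows "convex hull (\<eta> ` {a..b}) \<inter> convex hull (\<eta> ` ({b..1} \<union> {0..a})) \<subseteq> closed_segment (\<eta> a) (\<eta> b)"
proof -
  define p where "p = \<eta> a"
  define q where "q = \<eta> b"
  define ta where "ta = \<theta> a"
  define tb where "tb = \<theta> b"
  define ra where "ra = norm (p - c)"
  define rb where "rb = norm (q - c)"
  define s where "s = sin (tb - ta)"
  have a01: "a \<in> {0..1}" and b01: "b \<in> {0..1}" using ab by auto
  have pC: "p \<in> C" and qC: "q \<in> C" and pU: "p \<notin> U" and qU: "q \<notin> U"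
    using \<eta>C \<eta>U a01 b01 unfolding p_def q_def by auto
  have ra: "ra > 0" unfolding ra_def using pU cU by auto
  have rb: "rb > 0" unfolding rb_def using qU cU by auto
  have pth: "p - c = ra *\<^sub>R (cos ta *\<^sub>R e1 + sin ta *\<^sub>R e2)"
    using th[rule_format, OF a01] unfolding p_def ra_def ta_def .
  have qth: "q - c = rb *\<^sub>R (cos tb *\<^sub>R e1 + sin tb *\<^sub>R e2)"
    using th[rule_format, OF b01] unfolding q_def rb_def tb_def .
  have s0: "s \<noteq> 0"
  proof
    assume "s = 0"
    then have d: "cos tb *\<^sub>R e1 + sin tb *\<^sub>R e2 = cos (tb - ta) *\<^sub>R (cos ta *\<^sub>R e1 + sin ta *\<^sub>R e2)"
      unfolding s_def by (rule trig_dep)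
    have k: "(rb * cos (tb - ta) / ra) *\<^sub>R (p - c) + (- 1) *\<^sub>R (q - c) = 0"
      unfolding pth qth d using ra by simp
    show False using indep[rule_format, OF k[unfolded p_def q_def]] by simp
  qed
  have \<theta>0a: "\<theta> 0 \<le> ta" and \<theta>ab: "ta \<le> tb" and \<theta>b1: "tb \<le> \<theta> 1"
    using mono ab unfolding ta_def tb_def by auto
  have REP: "\<And>y f. y - c = norm (y - c) *\<^sub>R (cos f *\<^sub>R e1 + sin f *\<^sub>R e2) \<Longrightarrow>
      y - c = (norm (y - c) * sin (tb - f) / (ra * s)) *\<^sub>R (p - c) + (norm (y - c) * sin (f - ta) / (rb * s)) *\<^sub>R (q - c)"
    unfolding s_def by (rule trig_rep[OF s0[unfolded s_def] ra rb pth qth])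
  have Iang: "\<And>y. y \<in> \<eta> ` {a..b} \<Longrightarrow> \<exists>f. ta \<le> f \<and> f \<le> tb \<and> y - c = norm (y - c) *\<^sub>R (cos f *\<^sub>R e1 + sin f *\<^sub>R e2)"
  proof -
    fix y assume "y \<in> \<eta> ` {a..b}"
    then obtain l where l: "l \<in> {a..b}" "y = \<eta> l" by auto
    then have l01: "l \<in> {0..1}" using ab by auto
    show "\<exists>f. ta \<le> f \<and> f \<le> tb \<and> y - c = norm (y - c) *\<^sub>R (cos f *\<^sub>R e1 + sin f *\<^sub>R e2)"
    proof -
      have e: "y - c = norm (y - c) *\<^sub>R (cos (\<theta> l) *\<^sub>R e1 + sin (\<theta> l) *\<^sub>R e2)"
        unfolding l(2) by (rule th[rule_format, OF l01])
      have "ta \<le> \<theta> l" "\<theta> l \<le> tb" using mono l ab a01 b01 l01 unfolding ta_def tb_def by auto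
      then show ?thesis using e by blast
    qed
  qed
  have Jang: "\<And>y. y \<in> \<eta> ` ({b..1} \<union> {0..a}) \<Longrightarrow> \<exists>f. tb \<le> f \<and> f \<le> ta + 2 * pi \<and> y - c = norm (y - c) *\<^sub>R (cos f *\<^sub>R e1 + sin f *\<^sub>R e2)"
  proof -
    fix y assume "y \<in> \<eta> ` ({b..1} \<union> {0..a})"
    then obtain l where l: "l \<in> {b..1} \<union> {0..a}" "y = \<eta> l" by blast
    then have l01: "l \<in> {0..1}" using ab by auto
    have e: "y - c = norm (y - c) *\<^sub>R (cos (\<theta> l) *\<^sub>R e1 + sin (\<theta> l) *\<^sub>R e2)"
      unfolding l(2) by (rule th[rule_format, OF l01])
    show "\<exists>f. tb \<le> f \<and> f \<le> ta + 2 * pi \<and> y - c = norm (y - c) *\<^sub>R (cos f *\<^sub>R e1 + sin f *\<^sub>R e2)"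
    proof (cases "l \<in> {b..1}")
      case True
      then have "tb \<le> \<theta> l" "\<theta> l \<le> \<theta> 1" using mono b01 l01 unfolding tb_def by auto
      then have "tb \<le> \<theta> l" "\<theta> l \<le> ta + 2 * pi" using tot \<theta>0a by auto
      then show ?thesis using e by blast
    next
      case False
      then have la: "l \<in> {0..a}" using l by auto
      then have "\<theta> 0 \<le> \<theta> l" "\<theta> l \<le> ta" using mono a01 l01 unfolding ta_def by auto
      then have b1: "tb \<le> \<theta> l + 2 * pi" "\<theta> l + 2 * pi \<le> ta + 2 * pi" using tot \<theta>b1 by auto
      have cs: "cos (\<theta> l + 2 * pi) = cos (\<theta> l)" "sin (\<theta> l + 2 * pi) = sin (\<theta> l)"
        by (simp_all add: cos_periodic sin_periodic)
      have "y - c = norm (y - c) *\<^sub>R (cos (\<theta> l + 2 * pi) *\<^sub>R e1 + sin (\<theta> l + 2 * pi) *\<^sub>R e2)"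
        unfolding cs by (rule e)
      then show ?thesis using b1 by blast
    qed
  qed
  have subC: "\<eta> ` {a..b} \<subseteq> C" "\<eta> ` ({b..1} \<union> {0..a}) \<subseteq> C" using \<eta>C ab by auto
  have subU: "\<eta> ` {a..b} \<inter> U = {}" "\<eta> ` ({b..1} \<union> {0..a}) \<inter> U = {}" using \<eta>U ab by auto
  have indep': "\<forall>l m. l *\<^sub>R (p - c) + m *\<^sub>R (q - c) = 0 \<longrightarrow> l = 0 \<and> m = 0"
    using indep unfolding p_def q_def .
  have al: "0 \<le> tb - ta" "tb - ta \<le> 2 * pi" using \<theta>0a \<theta>ab \<theta>b1 tot by auto
  show ?thesis
  proof (cases "s > 0")
    case True
    have lt: "tb - ta < pi"
    proof (rule ccontr)
      assume "\<not> tb - ta < pi"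
      then have "sin (tb - ta) \<le> 0" using al by (intro sin_nonpos_pi_2pi) auto
      then show False using True unfolding s_def by simp
    qed
    have r1: "\<forall>y\<in>\<eta> ` {a..b}. \<exists>l m. 0 \<le> l \<and> 0 \<le> m \<and> y - c = l *\<^sub>R (p - c) + m *\<^sub>R (q - c)"
    proof
      fix y assume y: "y \<in> \<eta> ` {a..b}"
      then obtain f where f: "ta \<le> f" "f \<le> tb" "y - c = norm (y - c) *\<^sub>R (cos f *\<^sub>R e1 + sin f *\<^sub>R e2)"
        using Iang by blast
      have "0 \<le> sin (tb - f)" "0 \<le> sin (f - ta)" using f(1) f(2) lt by (auto intro!: sin_ge_zero)
      then show "\<exists>l m. 0 \<le> l \<and> 0 \<le> m \<and> y - c = l *\<^sub>R (p - c) + m *\<^sub>R (q - c)"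
        using REP[OF f(3)] sg(1)[OF norm_ge_zero ra True] sg(1)[OF norm_ge_zero rb True] by blast
    qed
    have r2: "\<forall>y\<in>\<eta> ` ({b..1} \<union> {0..a}). \<exists>l m. (l \<le> 0 \<or> m \<le> 0) \<and> y - c = l *\<^sub>R (p - c) + m *\<^sub>R (q - c)"
    proof
      fix y assume y: "y \<in> \<eta> ` ({b..1} \<union> {0..a})"
      then obtain f where f: "tb \<le> f" "f \<le> ta + 2 * pi" "y - c = norm (y - c) *\<^sub>R (cos f *\<^sub>R e1 + sin f *\<^sub>R e2)"
        using Jang by blast
      have "sin (tb - f) \<le> 0 \<or> sin (f - ta) \<le> 0"
      proof (cases "pi \<le> f - ta")
        case True then show ?thesis using f(1) f(2) by (intro disjI2 sin_nonpos_pi_2pi) auto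
      next
        case False then show ?thesis using f(1) f(2) al by (intro disjI1 sin_nonpos_negpi_0) auto
      qed
      then show "\<exists>l m. (l \<le> 0 \<or> m \<le> 0) \<and> y - c = l *\<^sub>R (p - c) + m *\<^sub>R (q - c)"
        using REP[OF f(3)] sg(2)[OF norm_ge_zero ra True] sg(2)[OF norm_ge_zero rb True] by blast
    qed
    show ?thesis
      using core[OF K Cc pC qC pU qU cU subC(1) subU(1) subC(2) subU(2) indep' r1 r2]
      unfolding p_def q_def .
  next
    case False
    then have neg: "s < 0" using s0 by simp
    have gt: "pi < tb - ta"
    proof (rule ccontr)
      assume "\<not> pi < tb - ta"
      then have "0 \<le> sin (tb - ta)" using al by (intro sin_ge_zero) auto
      then show False using neg unfolding s_def by simp
    qed
    have r1: "\<forall>y\<in>\<eta> ` ({b..1} \<union> {0..a}). \<exists>l m. 0 \<le> l \<and> 0 \<le> m \<and> y - c = l *\<^sub>R (p - c) + m *\<^sub>R (q - c)"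
    proof
      fix y assume y: "y \<in> \<eta> ` ({b..1} \<union> {0..a})"
      then obtain f where f: "tb \<le> f" "f \<le> ta + 2 * pi" "y - c = norm (y - c) *\<^sub>R (cos f *\<^sub>R e1 + sin f *\<^sub>R e2)"
        using Jang by blast
      have "sin (tb - f) \<le> 0" using f(1) f(2) gt al by (intro sin_nonpos_negpi_0) auto
      moreover have "sin (f - ta) \<le> 0" using f(1) f(2) gt al by (intro sin_nonpos_pi_2pi) auto
      ultimately show "\<exists>l m. 0 \<le> l \<and> 0 \<le> m \<and> y - c = l *\<^sub>R (p - c) + m *\<^sub>R (q - c)"
        using REP[OF f(3)] sg(3)[OF norm_ge_zero ra neg] sg(3)[OF norm_ge_zero rb neg] by blast
    qed
    have r2: "\<forall>y\<in>\<eta> ` {a..b}. \<exists>l m. (l \<le> 0 \<or> m \<le> 0) \<and> y - c = l *\<^sub>R (p - c) + m *\<^sub>R (q - c)"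
    proof
      fix y assume y: "y \<in> \<eta> ` {a..b}"
      then obtain f where f: "ta \<le> f" "f \<le> tb" "y - c = norm (y - c) *\<^sub>R (cos f *\<^sub>R e1 + sin f *\<^sub>R e2)"
        using Iang by blast
      have "0 \<le> sin (tb - f) \<or> 0 \<le> sin (f - ta)"
      proof (cases "f - ta \<le> pi")
        case True then show ?thesis using f(1) f(2) by (intro disjI2 sin_ge_zero) auto
      next
        case False then show ?thesis using f(1) f(2) al by (intro disjI1 sin_ge_zero) auto
      qed
      then show "\<exists>l m. (l \<le> 0 \<or> m \<le> 0) \<and> y - c = l *\<^sub>R (p - c) + m *\<^sub>R (q - c)"
        using REP[OF f(3)] sg(4)[OF norm_ge_zero ra neg] sg(4)[OF norm_ge_zero rb neg] by blast
    qed
    show ?thesis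
      using core[OF K Cc pC qC pU qU cU subC(2) subU(2) subC(1) subU(1) indep' r1 r2]
      unfolding p_def q_def by blast
  qed
qed

lemma ray_eq:
  fixes c p y :: "'a::real_normed_vector"
  assumes K: "\<forall>w\<in>C. \<forall>y. y \<in> open_segment c w \<longrightarrow> y \<in> U" and cU: "c \<in> U"
  and pC: "p \<in> C" and pU: "p \<notin> U" and yC: "y \<in> C" and yU: "y \<notin> U"
  and v: "p - c = norm (p - c) *\<^sub>R v" "y - c = norm (y - c) *\<^sub>R v"
  shows "y = p"
proof -
  define ra where "ra = norm (p - c)"
  define r where "r = norm (y - c)"
  have ra: "ra > 0" unfolding ra_def using pU cU by auto
  have r: "r > 0" unfolding r_def using yU cU by auto
  define k where "k = r / ra"
  have k0: "k > 0" unfolding k_def using ra r by simp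
  have yk: "y = (1 - k) *\<^sub>R c + k *\<^sub>R p"
  proof -
    have "y - c = r *\<^sub>R v" using v(2) unfolding r_def .
    also have "\<dots> = k *\<^sub>R (ra *\<^sub>R v)" unfolding k_def using ra by simp
    also have "\<dots> = k *\<^sub>R (p - c)" using v(1) unfolding ra_def by simp
    finally have "y - c = k *\<^sub>R (p - c)" .
    then show ?thesis by (simp add: algebra_simps)
  qed
  have cp: "c \<noteq> p" using cU pU by auto
  have cy: "c \<noteq> y" using cU yU by auto
  consider "k < 1" | "k = 1" | "k > 1" by linarith
  then show ?thesis
  proof cases
    case 1
    then have "y \<in> open_segment c p" unfolding in_segment using cp k0 yk by auto
    then show ?thesis using K pC yU by blast
  next
    case 2 then show ?thesis using yk by simp
  next
    case 3
    have "p = (1 - 1 / k) *\<^sub>R c + (1 / k) *\<^sub>R y"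
    proof -
      have kk: "k * (1 - 1 / k) = k - 1" "k * (1 / k) = 1" using k0 by (simp_all add: algebra_simps)
      have "k *\<^sub>R ((1 - 1 / k) *\<^sub>R c + (1 / k) *\<^sub>R y) = (k - 1) *\<^sub>R c + y"
        by (simp only: scaleR_add_right scaleR_scaleR kk scaleR_one)
      also have "\<dots> = k *\<^sub>R p" unfolding yk by (simp add: algebra_simps)
      finally show ?thesis using k0 by simp
    qed
    moreover have "0 < 1 / k" "1 / k < 1" using 3 by auto
    ultimately have "p \<in> open_segment c y" unfolding in_segment using cy by blast
    then show ?thesis using K yC pU by blast
  qed
qed

lemma main_eq:
  fixes \<eta> :: "real \<Rightarrow> 'a::real_inner" and e1 e2 c :: 'a and \<theta> :: "real \<Rightarrow> real"
  assumes K: "\<forall>w\<in>C. \<forall>y. y \<in> open_segment c w \<longrightarrow> y \<in> U"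
  and cU: "c \<in> U"
  and \<eta>C: "\<forall>l\<in>{0..1}. \<eta> l \<in> C" and \<eta>U: "\<forall>l\<in>{0..1}. \<eta> l \<notin> U"
  and th: "\<forall>l\<in>{0..1}. \<eta> l - c = norm (\<eta> l - c) *\<^sub>R (cos (\<theta> l) *\<^sub>R e1 + sin (\<theta> l) *\<^sub>R e2)"
  and mono: "\<forall>x\<in>{0..1}. \<forall>y\<in>{0..1}. x \<le> y \<longrightarrow> \<theta> x \<le> \<theta> y"
  and tot: "\<theta> 1 - \<theta> 0 \<le> 2 * pi"
  and on: "e1 \<bullet> e1 = 1" "e2 \<bullet> e2 = 1" "e1 \<bullet> e2 = 0"
  and ab: "0 \<le> a" "a < b" "b \<le> 1"
  and pq: "\<eta> a = \<eta> b"
  shows "convex hull (\<eta> ` {a..b}) \<inter> convex hull (\<eta> ` ({b..1} \<union> {0..a})) \<subseteq> closed_segment (\<eta> a) (\<eta> b)"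
proof -
  define p where "p = \<eta> a"
  define u where "u = (\<lambda>t. cos t *\<^sub>R e1 + sin t *\<^sub>R e2)"
  have a01: "a \<in> {0..1}" and b01: "b \<in> {0..1}" using ab by auto
  have pC: "p \<in> C" and pU: "p \<notin> U" using \<eta>C \<eta>U a01 unfolding p_def by auto
  have ra: "norm (p - c) > 0" using pU cU by auto
  have RAY: "\<And>l t. l \<in> {0..1} \<Longrightarrow> u (\<theta> l) = u t \<Longrightarrow> u t = u (\<theta> a) \<Longrightarrow> \<eta> l = p"
  proof -
    fix l t assume l: "l \<in> {0..1}" and h1: "u (\<theta> l) = u t" and h2: "u t = u (\<theta> a)"
    show "\<eta> l = p"
    proof (rule ray_eq[OF K cU pC pU])
      show "\<eta> l \<in> C" "\<eta> l \<notin> U" using \<eta>C \<eta>U l by auto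
      show "p - c = norm (p - c) *\<^sub>R u (\<theta> a)" unfolding p_def u_def by (rule th[rule_format, OF a01])
      have "\<eta> l - c = norm (\<eta> l - c) *\<^sub>R u (\<theta> l)" unfolding u_def by (rule th[rule_format, OF l])
      then show "\<eta> l - c = norm (\<eta> l - c) *\<^sub>R u (\<theta> a)" unfolding h1 h2 .
    qed
  qed
  have ueq: "u (\<theta> a) = u (\<theta> b)"
  proof -
    have "norm (p - c) *\<^sub>R u (\<theta> a) = p - c" unfolding p_def u_def by (rule th[rule_format, OF a01, symmetric])
    also have "\<dots> = norm (p - c) *\<^sub>R u (\<theta> b)" unfolding p_def pq u_def by (rule th[rule_format, OF b01])
    finally show ?thesis using ra by simp
  qed
  have "cos (\<theta> a) = u (\<theta> a) \<bullet> e1" "sin (\<theta> a) = u (\<theta> a) \<bullet> e2"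
       "cos (\<theta> b) = u (\<theta> b) \<bullet> e1" "sin (\<theta> b) = u (\<theta> b) \<bullet> e2"
    unfolding u_def using on inner_commute[of e2 e1] by (simp_all add: inner_add_left)
  then have "sin (\<theta> b) = sin (\<theta> a) \<and> cos (\<theta> b) = cos (\<theta> a)" using ueq by simp
  then obtain n :: int where n: "\<theta> b = \<theta> a + 2 * pi * n" using sin_cos_eq_iff by blast
  have \<theta>0a: "\<theta> 0 \<le> \<theta> a" and \<theta>ab: "\<theta> a \<le> \<theta> b" and \<theta>b1: "\<theta> b \<le> \<theta> 1"
    using mono ab by auto
  have "0 \<le> 2 * pi * n" "2 * pi * n \<le> 2 * pi" using n \<theta>0a \<theta>ab \<theta>b1 tot by linarith+
  then have "2 * pi * 0 \<le> 2 * pi * real_of_int n" "2 * pi * real_of_int n \<le> 2 * pi * 1" by simp_all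
  then have "0 \<le> real_of_int n" "real_of_int n \<le> 1"
    using mult_le_cancel_left_pos[of "2 * pi"] pi_gt_zero by (simp_all only:)
  then have "0 \<le> n" "n \<le> 1" by simp_all
  then have n01: "n = 0 \<or> n = 1" by auto
  show ?thesis
  proof (cases "n = 0")
    case True
    have "\<eta> ` {a..b} = {p}"
    proof
      show "\<eta> ` {a..b} \<subseteq> {p}"
      proof
        fix y assume "y \<in> \<eta> ` {a..b}"
        then obtain l where l: "l \<in> {a..b}" "y = \<eta> l" by auto
        then have l01: "l \<in> {0..1}" using ab by auto
        have "\<theta> a \<le> \<theta> l" "\<theta> l \<le> \<theta> b" using mono l l01 a01 b01 by auto
        then have "\<theta> l = \<theta> a" using n True by simp
        then show "y \<in> {p}" using RAY[OF l01, of "\<theta> a"] l by simp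
      qed
      show "{p} \<subseteq> \<eta> ` {a..b}" unfolding p_def using ab by auto
    qed
    then show ?thesis unfolding p_def[symmetric] pq[symmetric] by auto
  next
    case False
    then have n1: "n = 1" using n01 by simp
    then have tb: "\<theta> b = \<theta> a + 2 * pi" using n by simp
    have e0: "\<theta> 0 = \<theta> a" using tb \<theta>0a \<theta>ab \<theta>b1 tot by linarith
    have e1': "\<theta> 1 = \<theta> b" using tb \<theta>0a \<theta>ab \<theta>b1 tot by linarith
    have "\<eta> ` ({b..1} \<union> {0..a}) = {p}"
    proof
      show "\<eta> ` ({b..1} \<union> {0..a}) \<subseteq> {p}"
      proof
        fix y assume "y \<in> \<eta> ` ({b..1} \<union> {0..a})"
        then obtain l where l: "l \<in> {b..1} \<union> {0..a}" "y = \<eta> l" by blast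
        then have l01: "l \<in> {0..1}" using ab by auto
        show "y \<in> {p}"
        proof (cases "l \<in> {b..1}")
          case True
          then have "\<theta> b \<le> \<theta> l" "\<theta> l \<le> \<theta> 1" using mono l01 b01 by auto
          then have tl: "\<theta> l = \<theta> b" using e1' by linarith
          have "\<eta> l = p" by (rule RAY[OF l01, of "\<theta> b"]) (simp only: tl, rule ueq[symmetric])
          then show ?thesis using l(2) by simp
        next
          case False
          then have "l \<in> {0..a}" using l by auto
          then have "\<theta> 0 \<le> \<theta> l" "\<theta> l \<le> \<theta> a" using mono l01 a01 by auto
          then have tl: "\<theta> l = \<theta> a" using e0 by linarith
          have "\<eta> l = p" by (rule RAY[OF l01, of "\<theta> a"]) (simp only: tl)+
          then show ?thesis using l(2) by simp
        qed
      qed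
      have "a \<in> {b..1} \<union> {0..a}" using ab by auto
      then show "{p} \<subseteq> \<eta> ` ({b..1} \<union> {0..a})" unfolding p_def by blast
    qed
    then show ?thesis unfolding p_def[symmetric] pq[symmetric] by auto
  qed
qed

lemma dep_line:
  fixes p q c :: "'a::real_vector"
  assumes pq: "p \<noteq> q" and nd: "\<not> (\<forall>l m. l *\<^sub>R (p - c) + m *\<^sub>R (q - c) = 0 \<longrightarrow> l = 0 \<and> m = 0)"
  shows "\<exists>t. c = p + t *\<^sub>R (q - p)"
proof -
  from nd obtain l m where lm: "l *\<^sub>R (p - c) + m *\<^sub>R (q - c) = 0" "\<not> (l = 0 \<and> m = 0)" by blast
  have eq: "(l + m) *\<^sub>R c = l *\<^sub>R p + m *\<^sub>R q" using lm(1) by (simp add: algebra_simps)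
  show ?thesis
  proof (cases "l + m = 0")
    case True
    then have "m = - l" by simp
    have "l *\<^sub>R p + m *\<^sub>R q = 0" using eq True by simp
    then have "l *\<^sub>R p - l *\<^sub>R q = 0" using \<open>m = - l\<close> by simp
    then have "l *\<^sub>R (p - q) = 0" by (simp add: scaleR_diff_right)
    then have "l = 0" using pq by simp
    then show ?thesis using lm \<open>m = - l\<close> by simp
  next
    case False
    have "c = (1 / (l + m)) *\<^sub>R ((l + m) *\<^sub>R c)" using False by simp
    also have "\<dots> = (1 / (l + m)) *\<^sub>R (l *\<^sub>R p + m *\<^sub>R q)" unfolding eq ..
    also have "\<dots> = p + (m / (l + m)) *\<^sub>R (q - p)"
    proof -
      have "(l + m) *\<^sub>R (p + (m / (l + m)) *\<^sub>R (q - p)) = l *\<^sub>R p + m *\<^sub>R q"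
      proof -
        have f: "(l + m) * (m / (l + m)) = m" using False by simp
        have "(l + m) *\<^sub>R (p + (m / (l + m)) *\<^sub>R (q - p)) = (l + m) *\<^sub>R p + m *\<^sub>R (q - p)"
          by (simp only: scaleR_add_right scaleR_scaleR f)
        then show ?thesis by (simp add: algebra_simps)
      qed
      then show ?thesis using False by (metis (no_types, lifting) divide_self_if nonzero_divide_eq_eq scaleR_one scaleR_scaleR)
    qed
    finally show ?thesis by blast
  qed
qed

lemma one3_nz: "one3 \<noteq> 0"
proof
  assume "one3 = 0"
  then have "one3 $ 1 = 0" by simp
  then show False unfolding one3_def by simp
qed

lemma choose_c:
  assumes c0A: "c0 \<in> planeA" and e: "e > 0" and ball: "\<forall>z\<in>planeA. dist z c0 < e \<longrightarrow> z \<in> U"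
  and pA: "p \<in> planeA" and qA: "q \<in> planeA" and pq: "p \<noteq> q"
  shows "\<exists>c\<in>U. \<forall>l m. l *\<^sub>R (p - c) + m *\<^sub>R (q - c) = 0 \<longrightarrow> l = 0 \<and> m = 0"
proof (rule ccontr)
  assume nex: "\<not> ?thesis"
  define d where "d = q - p"
  define n where "n = cross3 one3 d"
  have d0: "d \<noteq> 0" using pq unfolding d_def by simp
  have d1: "one3 \<bullet> d = 0" using pA qA unfolding d_def planeA_def by (simp add: inner_diff_right inner_commute)
  have n1: "one3 \<bullet> n = 0" unfolding n_def by (rule dot_cross_self(1))
  have nd: "n \<bullet> d = 0" unfolding n_def by (rule dot_cross_self(3))
  have "(norm n)\<^sup>2 + (one3 \<bullet> d)\<^sup>2 = (norm one3 * norm d)\<^sup>2" unfolding n_def by (rule norm_cross_dot)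
  then have "(norm n)\<^sup>2 = (norm one3 * norm d)\<^sup>2" using d1 by simp
  moreover have "norm one3 * norm d > 0" using one3_nz d0 by simp
  ultimately have nn: "norm n > 0" by (metis norm_ge_zero power2_eq_iff_nonneg less_le)
  define \<delta> where "\<delta> = e / (2 * norm n)"
  have \<delta>: "\<delta> > 0" unfolding \<delta>_def using e nn by simp
  define c1 where "c1 = c0 + \<delta> *\<^sub>R n"
  have n1': "n \<bullet> one3 = 0" using n1 by (simp add: inner_commute)
  have c1A: "c1 \<in> planeA" using c0A n1' unfolding c1_def planeA_def by (simp add: inner_add_left)
  have "dist c1 c0 = \<delta> * norm n" unfolding c1_def using \<delta> by (simp add: dist_norm)
  also have "\<dots> < e" unfolding \<delta>_def using e nn by simp
  finally have c1U: "c1 \<in> U" using ball c1A by blast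
  have c0U: "c0 \<in> U" using ball c0A e by simp
  obtain t0 where t0: "c0 = p + t0 *\<^sub>R d" using dep_line[OF pq] nex c0U unfolding d_def by blast
  obtain t1 where t1: "c1 = p + t1 *\<^sub>R d" using dep_line[OF pq] nex c1U unfolding d_def by blast
  have "\<delta> *\<^sub>R n = (t1 - t0) *\<^sub>R d" using t0 t1 unfolding c1_def by (simp add: algebra_simps)
  then have "(\<delta> *\<^sub>R n) \<bullet> n = ((t1 - t0) *\<^sub>R d) \<bullet> n" by simp
  then have "\<delta> * (n \<bullet> n) = 0" using nd by (simp add: inner_commute)
  then show False using \<delta> nn by simp
qed

lemma e_on: "e1 \<bullet> e1 = 1" "e2 \<bullet> e2 = 1" "e1 \<bullet> e2 = 0"
proof -
  have s2: "sqrt 2 * sqrt 2 = (2::real)" by simp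
  have s6: "sqrt 6 * sqrt 6 = (6::real)" by simp
  show "e1 \<bullet> e1 = 1" unfolding e1_def
    by (simp add: inner_vec_def sum_3 power2_eq_square)
  show "e2 \<bullet> e2 = 1" unfolding e2_def
    by (simp add: inner_vec_def sum_3 power2_eq_square)
  show "e1 \<bullet> e2 = 0" unfolding e1_def e2_def
    by (simp add: inner_vec_def sum_3)
qed

lemma main_all:
  fixes \<eta> :: "real \<Rightarrow> 'a::real_inner" and e1 e2 c :: 'a and \<theta> :: "real \<Rightarrow> real"
  assumes K: "\<forall>w\<in>C. \<forall>y. y \<in> open_segment c w \<longrightarrow> y \<in> U"
  and Cc: "convex C" and cU: "c \<in> U"
  and \<eta>C: "\<forall>l\<in>{0..1}. \<eta> l \<in> C" and \<eta>U: "\<forall>l\<in>{0..1}. \<eta> l \<notin> U"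
  and th: "\<forall>l\<in>{0..1}. \<eta> l - c = norm (\<eta> l - c) *\<^sub>R (cos (\<theta> l) *\<^sub>R e1 + sin (\<theta> l) *\<^sub>R e2)"
  and mono: "(\<forall>x\<in>{0..1}. \<forall>y\<in>{0..1}. x \<le> y \<longrightarrow> \<theta> x \<le> \<theta> y) \<or>
           (\<forall>x\<in>{0..1}. \<forall>y\<in>{0..1}. x \<le> y \<longrightarrow> \<theta> y \<le> \<theta> x)"
  and tot: "\<bar>\<theta> 0 - \<theta> 1\<bar> \<le> 2 * pi"
  and on: "e1 \<bullet> e1 = 1" "e2 \<bullet> e2 = 1" "e1 \<bullet> e2 = 0"
  and ab: "0 \<le> a" "a < b" "b \<le> 1"
  and cases: "\<eta> a = \<eta> b \<or> (\<forall>l m. l *\<^sub>R (\<eta> a - c) + m *\<^sub>R (\<eta> b - c) = 0 \<longrightarrow> l = 0 \<and> m = 0)"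
  shows "convex hull (\<eta> ` {a..b}) \<inter> convex hull (\<eta> ` ({b..1} \<union> {0..a})) \<subseteq> closed_segment (\<eta> a) (\<eta> b)"
proof -
  obtain \<theta>' e2' where th': "\<forall>l\<in>{0..1}. \<eta> l - c = norm (\<eta> l - c) *\<^sub>R (cos (\<theta>' l) *\<^sub>R e1 + sin (\<theta>' l) *\<^sub>R e2')"
    and mono': "\<forall>x\<in>{0..1}. \<forall>y\<in>{0..1}. x \<le> y \<longrightarrow> \<theta>' x \<le> \<theta>' y"
    and tot': "\<theta>' 1 - \<theta>' 0 \<le> 2 * pi"
    and on': "e2' \<bullet> e2' = 1" "e1 \<bullet> e2' = 0"
  proof (cases "\<forall>x\<in>{0..1}. \<forall>y\<in>{0..1}. x \<le> y \<longrightarrow> \<theta> x \<le> \<theta> y")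
    case True
    show ?thesis by (rule that[of \<theta> e2]) (use th True tot on in auto)
  next
    case False
    then have dec: "\<forall>x\<in>{0..1}. \<forall>y\<in>{0..1}. x \<le> y \<longrightarrow> \<theta> y \<le> \<theta> x" using mono by blast
    show ?thesis
    proof (rule that[of "\<lambda>l. - \<theta> l" "- e2"])
      show "\<forall>l\<in>{0..1}. \<eta> l - c = norm (\<eta> l - c) *\<^sub>R (cos (- \<theta> l) *\<^sub>R e1 + sin (- \<theta> l) *\<^sub>R - e2)"
      proof
        fix l :: real assume l: "l \<in> {0..1}"
        have "cos (- \<theta> l) *\<^sub>R e1 + sin (- \<theta> l) *\<^sub>R - e2 = cos (\<theta> l) *\<^sub>R e1 + sin (\<theta> l) *\<^sub>R e2" by simp
        then show "\<eta> l - c = norm (\<eta> l - c) *\<^sub>R (cos (- \<theta> l) *\<^sub>R e1 + sin (- \<theta> l) *\<^sub>R - e2)"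
          using th[rule_format, OF l] by (simp only:)
      qed
      show "\<forall>x\<in>{0..1}. \<forall>y\<in>{0..1}. x \<le> y \<longrightarrow> - \<theta> x \<le> - \<theta> y" using dec by auto
      show "- \<theta> 1 - - \<theta> 0 \<le> 2 * pi" using tot by auto
      show "- e2 \<bullet> - e2 = 1" "e1 \<bullet> - e2 = 0" using on by auto
    qed
  qed
  show ?thesis
  proof (cases "\<eta> a = \<eta> b")
    case True
    show ?thesis by (rule main_eq[OF K cU \<eta>C \<eta>U th' mono' tot' on(1) on' ab True])
  next
    case False
    then have ind: "\<forall>l m. l *\<^sub>R (\<eta> a - c) + m *\<^sub>R (\<eta> b - c) = 0 \<longrightarrow> l = 0 \<and> m = 0" using cases by blast
    show ?thesis by (rule main_geo[OF K Cc cU \<eta>C \<eta>U th' mono' tot' ind ab])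
  qed
qed


theorem lemma3:
  fixes chi \<eta> :: "real \<Rightarrow> real^3" and a b :: real
  assumes chi_cont: "continuous_on {0<..} chi"
    and chi_bdd: "bounded (chi ` {0<..})"
    and chi_nonneg: "\<forall>l\<in>{0<..}. \<forall>i. 0 \<le> chi l $ i"
    and chi_supp: "closure {l \<in> {0<..}. chi l \<noteq> 0} = {0..1}"
    and chi_nz: "\<forall>l\<in>{0<..<1}. chi l \<noteq> 0"
    and eta_def: "\<forall>l\<in>{0<..<1}. \<eta> l = (1 / (one3 \<bullet> chi l)) *\<^sub>R chi l"
    and eta_cont: "continuous_on {0..1} \<eta>"
    and P_int: "interior (spec_cone chi) \<noteq> {}"
    and convex: "convex_locus \<eta> (Tset chi)"
    and ab: "0 \<le> a" "a < b" "b \<le> 1"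
  shows "convex hull (\<eta> ` cyc_interval a b) \<inter> convex hull (\<eta> ` cyc_interval b a)
           = closed_segment (\<eta> a) (\<eta> b)"
proof -
  define T where "T = Tset chi"
  define U where "U = (top_of_set planeA) interior_of T"
  define C where "C = closure T"
  have TA: "T \<subseteq> planeA" unfolding T_def Tset_def by auto
  have cvxA: "convex planeA"
  proof -
    have "planeA = {x. one3 \<bullet> x = 1}" unfolding planeA_def by (simp add: inner_commute)
    then show ?thesis using convex_hyperplane[of one3 1] by simp
  qed
  have Tc: "convex T" unfolding T_def Tset_def
    by (rule convex_Int[OF spec_cone_convex[OF chi_cont chi_bdd] cvxA])
  have Cc: "convex C" unfolding C_def using Tc by (rule convex_closure)
  have KK: "\<And>c. c \<in> U \<Longrightarrow> \<forall>w\<in>C. \<forall>y. y \<in> open_segment c w \<longrightarrow> y \<in> U"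
    unfolding U_def C_def using K1[OF Tc TA] by blast
  have fr: "\<eta> ` {0..1} \<subseteq> (top_of_set planeA) frontier_of T"
    and ang: "\<forall>c\<in>U. \<exists>\<theta> :: real \<Rightarrow> real.
          continuous_on {0..1} \<theta> \<and>
          (\<forall>l\<in>{0..1}. \<eta> l - c = norm (\<eta> l - c) *\<^sub>R (cos (\<theta> l) *\<^sub>R e1 + sin (\<theta> l) *\<^sub>R e2)) \<and>
          ((\<forall>x\<in>{0..1}. \<forall>y\<in>{0..1}. x \<le> y \<longrightarrow> \<theta> x \<le> \<theta> y) \<or>
           (\<forall>x\<in>{0..1}. \<forall>y\<in>{0..1}. x \<le> y \<longrightarrow> \<theta> y \<le> \<theta> x)) \<and>
          \<bar>\<theta> 0 - \<theta> 1\<bar> \<le> 2 * pi"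
    using convex unfolding convex_locus_def T_def U_def by auto
  have \<eta>C: "\<forall>l\<in>{0..1}. \<eta> l \<in> C" and \<eta>U: "\<forall>l\<in>{0..1}. \<eta> l \<notin> U"
    using fr unfolding frontier_of_def clo_char[OF TA] C_def U_def by auto
  have CA: "C \<subseteq> planeA" unfolding C_def using TA planeA_closed by (simp add: closure_minimal)
  obtain x where "x \<in> interior (spec_cone chi)" using P_int by blast
  then obtain r where xr: "r > 0" "ball x r \<subseteq> spec_cone chi" unfolding mem_interior by blast
  have xi: "\<And>i. x $ i > 0"
  proof -
    fix i :: 3
    have "x - (r / 2) *\<^sub>R axis i 1 \<in> ball x r" using xr(1) by (simp add: dist_norm)
    then have "0 \<le> (x - (r / 2) *\<^sub>R axis i 1) $ i"
      using xr(2) spec_cone_nonneg[OF chi_cont chi_bdd chi_nonneg] by blast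
    then show "x $ i > 0" using xr(1) by (simp add: axis_def)
  qed
  define \<sigma> where "\<sigma> = x \<bullet> one3"
  have \<sigma>: "\<sigma> > 0" unfolding \<sigma>_def one3_def inner_vec_def
    using xi by (simp add: sum_pos)
  define c0 where "c0 = (1 / \<sigma>) *\<^sub>R x"
  have c0A: "c0 \<in> planeA" unfolding c0_def planeA_def using \<sigma> unfolding \<sigma>_def by simp
  define e where "e = r / \<sigma>"
  have e: "e > 0" unfolding e_def using xr \<sigma> by simp
  have ballT: "\<forall>z\<in>planeA. dist z c0 < e \<longrightarrow> z \<in> T"
  proof safe
    fix z assume zA: "z \<in> planeA" and zd: "dist z c0 < e"
    have "dist (\<sigma> *\<^sub>R z) x = \<sigma> * dist z c0"
    proof -
      have "\<sigma> *\<^sub>R z - x = \<sigma> *\<^sub>R (z - c0)" unfolding c0_def using \<sigma> by (simp add: algebra_simps)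
      then show ?thesis using \<sigma> by (simp add: dist_norm)
    qed
    also have "\<dots> < r" using zd \<sigma> unfolding e_def by (simp add: field_simps)
    finally have "\<sigma> *\<^sub>R z \<in> spec_cone chi" using xr(2) by (auto simp: dist_commute)
    then have "(1 / \<sigma>) *\<^sub>R (\<sigma> *\<^sub>R z) \<in> spec_cone chi"
      using spec_cone_scale[OF chi_cont chi_bdd, of "\<sigma> *\<^sub>R z" "1 / \<sigma>"] \<sigma> by (simp only:) simp
    then have "z \<in> spec_cone chi" using \<sigma> by simp
    then show "z \<in> T" using zA unfolding T_def Tset_def by simp
  qed
  have ballU: "\<forall>z\<in>planeA. dist z c0 < e \<longrightarrow> z \<in> U"
  proof safe
    fix z assume zA: "z \<in> planeA" and zd: "dist z c0 < e"
    have "\<forall>w\<in>planeA. dist w z < e - dist z c0 \<longrightarrow> w \<in> T"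
    proof safe
      fix w assume wA: "w \<in> planeA" and wd: "dist w z < e - dist z c0"
      have "dist w c0 \<le> dist w z + dist z c0" by (rule dist_triangle)
      then have "dist w c0 < e" using wd by linarith
      then show "w \<in> T" using ballT wA by blast
    qed
    moreover have "e - dist z c0 > 0" using zd by simp
    ultimately show "z \<in> U" unfolding U_def int_char[OF TA] using zA by blast
  qed
  have c0U: "c0 \<in> U" using ballU c0A e by simp
  have cyc1: "cyc_interval a b = {a..b}" using ab unfolding cyc_interval_def by simp
  have cyc2: "cyc_interval b a = {b..1} \<union> {0..a}" using ab unfolding cyc_interval_def by simp
  have sub: "convex hull (\<eta> ` {a..b}) \<inter> convex hull (\<eta> ` ({b..1} \<union> {0..a})) \<subseteq> closed_segment (\<eta> a) (\<eta> b)"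
  proof -
    obtain c where cU: "c \<in> U" and cases: "\<eta> a = \<eta> b \<or> (\<forall>l m. l *\<^sub>R (\<eta> a - c) + m *\<^sub>R (\<eta> b - c) = 0 \<longrightarrow> l = 0 \<and> m = 0)"
    proof (cases "\<eta> a = \<eta> b")
      case True then show ?thesis using that c0U by blast
    next
      case False
      have "\<eta> a \<in> planeA" "\<eta> b \<in> planeA" using \<eta>C CA ab by auto
      then show ?thesis using choose_c[OF c0A e ballU _ _ False] that by blast
    qed
    from ang cU obtain \<theta> where
      th: "\<forall>l\<in>{0..1}. \<eta> l - c = norm (\<eta> l - c) *\<^sub>R (cos (\<theta> l) *\<^sub>R e1 + sin (\<theta> l) *\<^sub>R e2)"
      and mono: "(\<forall>x\<in>{0..1}. \<forall>y\<in>{0..1}. x \<le> y \<longrightarrow> \<theta> x \<le> \<theta> y) \<or>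
           (\<forall>x\<in>{0..1}. \<forall>y\<in>{0..1}. x \<le> y \<longrightarrow> \<theta> y \<le> \<theta> x)"
      and tot: "\<bar>\<theta> 0 - \<theta> 1\<bar> \<le> 2 * pi"
      by blast
    show ?thesis by (rule main_all[OF KK[OF cU] Cc cU \<eta>C \<eta>U th mono tot e_on ab cases])
  qed
  have sup: "closed_segment (\<eta> a) (\<eta> b) \<subseteq> convex hull (\<eta> ` {a..b}) \<inter> convex hull (\<eta> ` ({b..1} \<union> {0..a}))"
  proof -
    have "{\<eta> a, \<eta> b} \<subseteq> \<eta> ` {a..b}" "{\<eta> a, \<eta> b} \<subseteq> \<eta> ` ({b..1} \<union> {0..a})" using ab by auto
    then have "convex hull {\<eta> a, \<eta> b} \<subseteq> convex hull (\<eta> ` {a..b})"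
      "convex hull {\<eta> a, \<eta> b} \<subseteq> convex hull (\<eta> ` ({b..1} \<union> {0..a}))" by (simp_all add: hull_mono)
    then show ?thesis by (simp add: segment_convex_hull)
  qed
  show ?thesis unfolding cyc1 cyc2 using sub sup by blast
qed

end
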